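(* Let $\mathcal{H}^c_{B_n}$ be the degenerate affine Hecke–Clifford algebra of type $B_n$, $n\ge2$. Let $w\in W_{B_n}$ have signed cycle type $(\lambda,\mu)$. If it is not the case that all parts of $\lambda$ are odd and all parts of $\mu$ are even, then $w\in[\mathcal{H}^c_{B_n},\mathcal{H}^c_{B_n}]$.
   Context: $W_{B_n}$ is the group of signed permutations of $\{1,\dots,n\}$, generated by $s_i=(i,i+1)$ ($1\le i\le n-1$) and the sign change $s_n$ of $n$. The signed cycle type of $w$ is the pair $(\lambda,\mu)$ where $\lambda$ (resp. $\mu$) lists the lengths of the cycles of the underlying permutation along which $w$ makes an even (resp. odd) number of sign changes. With parameters $u,v\in\mathbb{C}$, $\mathcal{H}^c_{B_n}$ is generated by commuting $x_1,\dots,x_n$, Clifford generators $c_1,\dots,c_n$ ($c_i^2=1$, $c_ic_j=-c_jc_i$, $i\ne j$) and $W_{B_n}$, with $\mathbb{C}[x]$, the Clifford algebra and $\mathbb{C}W_{B_n}$ subalgebras and relations $x_ic_i=-c_ix_i$, $x_ic_j=c_jx_i$ ($i\ne j$), $\sigma c_i=c_{\sigma(i)}\sigma$ for $\sigma\in\langle s_1,\dots,s_{n-1}\rangle$, $x_{i+1}s_i-s_ix_i=u(1-c_{i+1}c_i)$, $x_js_i=s_ix_j$ ($j\ne i,i+1$) for $i<n$, and $s_nc_n=-c_ns_n$, $s_nc_i=c_is_n$ ($i\ne n$), $s_nx_n+x_ns_n=-\sqrt2 v$, $s_nx_i=x_is_n$ ($i\ne n$). $[H,H]$ is the linear span of all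 $hh'-h'h$. *)

theory Defs
  imports Complex_Main "HOL-Library.Multiset"
begin

datatype gen = X nat | Cl nat | S nat

type_synonym fa = "gen list \<Rightarrow> complex"

definition valid_gen :: "nat \<Rightarrow> gen \<Rightarrow> bool" where
  "valid_gen n g = (case g of X i \<Rightarrow> 1 \<le> i \<and> i \<le> n | Cl i \<Rightarrow> 1 \<le> i \<and> i \<le> n
                              | S i \<Rightarrow> 1 \<le> i \<and> i \<le> n)"

definition valid_word :: "nat \<Rightarrow> gen list \<Rightarrow> bool" where
  "valid_word n ws = (\<forall>g\<in>set ws. valid_gen n g)"

definition in_free :: "nat \<Rightarrow> fa \<Rightarrow> bool" where
  "in_free n f = (finite {w. f w \<noteq> 0} \<and> (\<forall>w. f w \<noteq> 0 \<longrightarrow> valid_word n w))"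

definition mono :: "gen list \<Rightarrow> fa" where
  "mono w = (\<lambda>v. if v = w then 1 else 0)"

definition fmul :: "fa \<Rightarrow> fa \<Rightarrow> fa" where
  "fmul f g = (\<lambda>w. \<Sum>i = 0..length w. f (take i w) * g (drop i w))"

definition lincomb :: "(complex \<times> gen list) list \<Rightarrow> fa" where
  "lincomb l = (\<lambda>w. \<Sum>(c, v)\<leftarrow>l. if v = w then c else 0)"

inductive_set lspan :: "fa set \<Rightarrow> fa set" for A :: "fa set" where
  zero: "(\<lambda>_. 0) \<in> lspan A"
| step: "x \<in> A \<Longrightarrow> y \<in> lspan A \<Longrightarrow> (\<lambda>w. c * x w + y w) \<in> lspan A"

text \<open>Each relation lhs = rhs is encoded as the element lhs - rhs.\<close>
definition rels :: "nat \<Rightarrow> complex \<Rightarrow> complex \<Rightarrow> fa set" where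
  "rels n u v =
     \<comment> \<open>polynomial algebra C[x]\<close>
     {lincomb [(1, [X i, X j]), (-1, [X j, X i])] | i j. i \<in> {1..n} \<and> j \<in> {1..n}}
   \<union> \<comment> \<open>Clifford algebra\<close>
     {lincomb [(1, [Cl i, Cl i]), (-1, [])] | i. i \<in> {1..n}}
   \<union> {lincomb [(1, [Cl i, Cl j]), (1, [Cl j, Cl i])] | i j. i \<in> {1..n} \<and> j \<in> {1..n} \<and> i \<noteq> j}
   \<union> \<comment> \<open>Coxeter presentation of W(B_n)\<close>
     {lincomb [(1, [S i, S i]), (-1, [])] | i. i \<in> {1..n}}
   \<union> {lincomb [(1, [S i, S (Suc i), S i]), (-1, [S (Suc i), S i, S (Suc i)])] | i. 1 \<le> i \<and> i + 2 \<le> n}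
   \<union> {lincomb [(1, [S i, S j]), (-1, [S j, S i])] | i j. i \<in> {1..n} \<and> j \<in> {1..n} \<and> (i + 2 \<le> j \<or> j + 2 \<le> i)}
   \<union> {lincomb [(1, [S (n-1), S n, S (n-1), S n]), (-1, [S n, S (n-1), S n, S (n-1)])]}
   \<union> \<comment> \<open>mixed relations x / c\<close>
     {lincomb [(1, [X i, Cl i]), (1, [Cl i, X i])] | i. i \<in> {1..n}}
   \<union> {lincomb [(1, [X i, Cl j]), (-1, [Cl j, X i])] | i j. i \<in> {1..n} \<and> j \<in> {1..n} \<and> i \<noteq> j}
   \<union> \<comment> \<open>sigma c_i = c_sigma(i) sigma, for the generators s_i, i < n, of S_n\<close>
     {lincomb [(1, [S i, Cl i]), (-1, [Cl (Suc i), S i])] | i. 1 \<le> i \<and> i < n}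
   \<union> {lincomb [(1, [S i, Cl (Suc i)]), (-1, [Cl i, S i])] | i. 1 \<le> i \<and> i < n}
   \<union> {lincomb [(1, [S i, Cl j]), (-1, [Cl j, S i])] | i j. 1 \<le> i \<and> i < n \<and> j \<in> {1..n} \<and> j \<noteq> i \<and> j \<noteq> Suc i}
   \<union> \<comment> \<open>x_{i+1} s_i - s_i x_i = u (1 - c_{i+1} c_i)\<close>
     {lincomb [(1, [X (Suc i), S i]), (-1, [S i, X i]), (-u, []), (u, [Cl (Suc i), Cl i])] | i. 1 \<le> i \<and> i < n}
   \<union> {lincomb [(1, [X j, S i]), (-1, [S i, X j])] | i j. 1 \<le> i \<and> i < n \<and> j \<in> {1..n} \<and> j \<noteq> i \<and> j \<noteq> Suc i}
   \<union> \<comment> \<open>relations involving s_n\<close>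
     {lincomb [(1, [S n, Cl n]), (1, [Cl n, S n])]}
   \<union> {lincomb [(1, [S n, Cl i]), (-1, [Cl i, S n])] | i. i \<in> {1..n} \<and> i \<noteq> n}
   \<union> {lincomb [(1, [S n, X n]), (1, [X n, S n]), (complex_of_real (sqrt 2) * v, [])]}
   \<union> {lincomb [(1, [S n, X i]), (-1, [X i, S n])] | i. i \<in> {1..n} \<and> i \<noteq> n}"

text \<open>Generators (as a linear span) of the two-sided ideal generated by the relations.\<close>
definition ideal_gens :: "nat \<Rightarrow> complex \<Rightarrow> complex \<Rightarrow> fa set" where
  "ideal_gens n u v = {fmul (fmul (mono a) r) (mono b) | a b r.
                         valid_word n a \<and> valid_word n b \<and> r \<in> rels n u v}"

definition commutators :: "nat \<Rightarrow> fa set" where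
  "commutators n = {(\<lambda>w. fmul f g w - fmul g f w) | f g. in_free n f \<and> in_free n g}"

text \<open>The image of f in H^c_{B_n} lies in [H,H] iff f lies in the span of commutators of
  the free algebra plus the ideal of relations.\<close>
definition in_commutator_space :: "nat \<Rightarrow> complex \<Rightarrow> complex \<Rightarrow> fa \<Rightarrow> bool" where
  "in_commutator_space n u v f \<longleftrightarrow> f \<in> lspan (commutators n \<union> ideal_gens n u v)"

definition signed_perms :: "nat \<Rightarrow> (int \<Rightarrow> int) set" where
  "signed_perms n = {w. bij_betw w {k. k \<noteq> 0 \<and> \<bar>k\<bar> \<le> int n} {k. k \<noteq> 0 \<and> \<bar>k\<bar> \<le> int n}
                       \<and> (\<forall>k. w (- k) = - w k) \<and> (\<forall>k. \<bar>k\<bar> > int n \<longrightarrow> w k = k)}"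

definition sgen :: "nat \<Rightarrow> nat \<Rightarrow> int \<Rightarrow> int" where
  "sgen n i = (if i < n then
                 (\<lambda>k. if \<bar>k\<bar> = int i then sgn k * int (Suc i)
                      else if \<bar>k\<bar> = int (Suc i) then sgn k * int i else k)
               else (\<lambda>k. if \<bar>k\<bar> = int n then - k else k))"

definition word_to_perm :: "nat \<Rightarrow> nat list \<Rightarrow> int \<Rightarrow> int" where
  "word_to_perm n ws = foldr (\<lambda>i f. sgen n i \<circ> f) ws id"

definition underlying :: "(int \<Rightarrow> int) \<Rightarrow> nat \<Rightarrow> nat" where
  "underlying w i = nat \<bar>w (int i)\<bar>"

definition cyc :: "nat \<Rightarrow> (int \<Rightarrow> int) \<Rightarrow> nat \<Rightarrow> nat set" where
  "cyc n w i = {j \<in> {1..n}. \<exists>k. (underlying w ^^ k) i = j}"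

definition cycles :: "nat \<Rightarrow> (int \<Rightarrow> int) \<Rightarrow> nat set set" where
  "cycles n w = cyc n w ` {1..n}"

definition nsigns :: "(int \<Rightarrow> int) \<Rightarrow> nat set \<Rightarrow> nat" where
  "nsigns w cy = card {i \<in> cy. w (int i) < 0}"

definition sct_lambda :: "nat \<Rightarrow> (int \<Rightarrow> int) \<Rightarrow> nat multiset" where
  "sct_lambda n w = image_mset card (mset_set {cy \<in> cycles n w. even (nsigns w cy)})"

definition sct_mu :: "nat \<Rightarrow> (int \<Rightarrow> int) \<Rightarrow> nat multiset" where
  "sct_mu n w = image_mset card (mset_set {cy \<in> cycles n w. odd (nsigns w cy)})"

end

theory Submission imports Defs "HOL-Combinatorics.Cycles" begin

lemma lspan_add: "x \<in> lspan A \<Longrightarrow> y \<in> lspan A \<Longrightarrow> (\<lambda>w. x w + y w) \<in> lspan A"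
proof (induction x rule: lspan.induct)
  case zero then show ?case by simp
next
  case (step x z c)
  have "(\<lambda>w. c * x w + (z w + y w)) \<in> lspan A" using step by (intro lspan.step) auto
  then show ?case by (simp add: add.assoc)
qed

lemma lspan_scale: "x \<in> lspan A \<Longrightarrow> (\<lambda>w. d * x w) \<in> lspan A"
proof (induction x rule: lspan.induct)
  case zero then show ?case by (simp add: lspan.zero)
next
  case (step x z c)
  have "(\<lambda>w. (d*c) * x w + d * z w) \<in> lspan A" using step by (intro lspan.step) auto
  then show ?case by (simp add: algebra_simps)
qed

lemma lspan_base: "x \<in> A \<Longrightarrow> x \<in> lspan A"
  using lspan.step[of x A "\<lambda>_. 0" 1] lspan.zero by simp

lemma lspan_mono: "x \<in> lspan A \<Longrightarrow> A \<subseteq> B \<Longrightarrow> x \<in> lspan B"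
proof (induction x rule: lspan.induct)
  case zero then show ?case by (simp add: lspan.zero)
next
  case (step x z c) then show ?case by (intro lspan.step) auto
qed

lemma take_drop_split: "i \<le> length w \<Longrightarrow> (take i w = p \<and> drop i w = q) \<longleftrightarrow> (i = length p \<and> w = p @ q)"
proof
  assume "i \<le> length w" "take i w = p \<and> drop i w = q"
  then show "i = length p \<and> w = p @ q" by auto
next
  assume "i = length p \<and> w = p @ q" then show "take i w = p \<and> drop i w = q" by simp
qed
lemma fmul_mono_mono: "fmul (mono p) (mono q) = mono (p @ q)"
proof
  fix w
  have "fmul (mono p) (mono q) w = (\<Sum>i = 0..length w. if i = length p \<and> w = p @ q then 1 else 0)"
    unfolding fmul_def mono_def
  proof (rule sum.cong)
    fix i assume "i \<in> {0..length w}"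
    then have "i \<le> length w" by simp
    show "(if take i w = p then 1 else 0) * (if drop i w = q then 1 else 0) = (if i = length p \<and> w = p @ q then 1 else (0::complex))"
      using take_drop_split[OF \<open>i \<le> length w\<close>, of p q] by (auto split: if_splits)
  qed simp
  also have "\<dots> = mono (p @ q) w" unfolding mono_def by (cases "w = p @ q") (auto simp: sum.delta')
  finally show "fmul (mono p) (mono q) w = mono (p @ q) w" .
qed

lemma fmul_lin_r: "fmul f (\<lambda>w. g w + c * h w) = (\<lambda>w. fmul f g w + c * fmul f h w)"
  unfolding fmul_def by (simp add: algebra_simps sum.distrib sum_distrib_left)

lemma fmul_lin_l: "fmul (\<lambda>w. g w + c * h w) f = (\<lambda>w. fmul g f w + c * fmul h f w)"
  unfolding fmul_def by (simp add: algebra_simps sum.distrib sum_distrib_left)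

lemma lincomb2: "lincomb [(1, l1), (c, l2)] = (\<lambda>w. mono l1 w + c * mono l2 w)"
  unfolding lincomb_def mono_def by (auto simp: fun_eq_iff)

definition RR :: "nat \<Rightarrow> complex \<Rightarrow> complex \<Rightarrow> gen list \<Rightarrow> complex \<Rightarrow> gen list \<Rightarrow> bool" where
  "RR n u v p c q \<longleftrightarrow> (\<lambda>w. mono p w - c * mono q w) \<in> lspan (ideal_gens n u v)"

lemma RR_base:
  assumes "lincomb [(1, l1), (c, l2)] \<in> rels n u v" "valid_word n a" "valid_word n b"
  shows "RR n u v (a @ l1 @ b) (- c) (a @ l2 @ b)"
proof -
  have "fmul (fmul (mono a) (lincomb [(1, l1), (c, l2)])) (mono b) \<in> ideal_gens n u v"
    unfolding ideal_gens_def apply (rule CollectI) apply (rule exI[where x=a]) apply (rule exI[where x=b]) apply (rule exI[where x="lincomb [(1, l1), (c, l2)]"]) using assms by (intro conjI refl)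
  also have "fmul (fmul (mono a) (lincomb [(1, l1), (c, l2)])) (mono b)
     = (\<lambda>w. mono (a @ l1 @ b) w - (-c) * mono (a @ l2 @ b) w)"
    unfolding lincomb2 fmul_lin_r fmul_lin_l fmul_mono_mono by simp
  finally show ?thesis unfolding RR_def by (rule lspan_base)
qed

lemma RR_refl: "RR n u v p 1 p"
  unfolding RR_def using lspan.zero by simp

lemma RR_trans: "RR n u v p c q \<Longrightarrow> RR n u v q d r \<Longrightarrow> RR n u v p (c * d) r"
  unfolding RR_def
proof -
  assume a: "(\<lambda>w. mono p w - c * mono q w) \<in> lspan (ideal_gens n u v)"
     and b: "(\<lambda>w. mono q w - d * mono r w) \<in> lspan (ideal_gens n u v)"
  have "(\<lambda>w. (mono p w - c * mono q w) + c * (mono q w - d * mono r w)) \<in> lspan (ideal_gens n u v)"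
    using lspan_add[OF a lspan_scale[OF b]] .
  then show "(\<lambda>w. mono p w - c * d * mono r w) \<in> lspan (ideal_gens n u v)"
    by (simp add: algebra_simps)
qed

lemma rel_ClCl: "i \<in> {1..n} \<Longrightarrow> lincomb [(1, [Cl i, Cl i]), (-1, [])] \<in> rels n u v"
  unfolding rels_def apply (rule UnI1) apply (rule UnI1) apply (rule UnI1) apply (rule UnI1) apply (rule UnI1) apply (rule UnI1) apply (rule UnI1) apply (rule UnI1) apply (rule UnI1) apply (rule UnI1) apply (rule UnI1) apply (rule UnI1) apply (rule UnI1) apply (rule UnI1) apply (rule UnI1) apply (rule UnI1) apply (rule UnI2) by blast
lemma rel_ClCl2: "i \<in> {1..n} \<Longrightarrow> j \<in> {1..n} \<Longrightarrow> i \<noteq> j \<Longrightarrow> lincomb [(1, [Cl i, Cl j]), (1, [Cl j, Cl i])] \<in> rels n u v"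
  unfolding rels_def apply (rule UnI1) apply (rule UnI1) apply (rule UnI1) apply (rule UnI1) apply (rule UnI1) apply (rule UnI1) apply (rule UnI1) apply (rule UnI1) apply (rule UnI1) apply (rule UnI1) apply (rule UnI1) apply (rule UnI1) apply (rule UnI1) apply (rule UnI1) apply (rule UnI1) apply (rule UnI2) by blast
lemma rel_SCl1: "1 \<le> i \<Longrightarrow> i < n \<Longrightarrow> lincomb [(1, [S i, Cl i]), (-1, [Cl (Suc i), S i])] \<in> rels n u v"
  unfolding rels_def apply (rule UnI1) apply (rule UnI1) apply (rule UnI1) apply (rule UnI1) apply (rule UnI1) apply (rule UnI1) apply (rule UnI1) apply (rule UnI1) apply (rule UnI2) by blast
lemma rel_SCl2: "1 \<le> i \<Longrightarrow> i < n \<Longrightarrow> lincomb [(1, [S i, Cl (Suc i)]), (-1, [Cl i, S i])] \<in> rels n u v"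
  unfolding rels_def apply (rule UnI1) apply (rule UnI1) apply (rule UnI1) apply (rule UnI1) apply (rule UnI1) apply (rule UnI1) apply (rule UnI1) apply (rule UnI2) by blast
lemma rel_SCl3: "1 \<le> i \<Longrightarrow> i < n \<Longrightarrow> j \<in> {1..n} \<Longrightarrow> j \<noteq> i \<Longrightarrow> j \<noteq> Suc i \<Longrightarrow> lincomb [(1, [S i, Cl j]), (-1, [Cl j, S i])] \<in> rels n u v"
  unfolding rels_def apply (rule UnI1) apply (rule UnI1) apply (rule UnI1) apply (rule UnI1) apply (rule UnI1) apply (rule UnI1) apply (rule UnI2) by blast
lemma rel_SnCl1: "lincomb [(1, [S n, Cl n]), (1, [Cl n, S n])] \<in> rels n u v"
  unfolding rels_def apply (rule UnI1) apply (rule UnI1) apply (rule UnI1) apply (rule UnI2) by blast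
lemma rel_SnCl2: "j \<in> {1..n} \<Longrightarrow> j \<noteq> n \<Longrightarrow> lincomb [(1, [S n, Cl j]), (-1, [Cl j, S n])] \<in> rels n u v"
  unfolding rels_def apply (rule UnI1) apply (rule UnI1) apply (rule UnI2) by blast

lemma valid_app[simp]: "valid_word n (a @ b) = (valid_word n a \<and> valid_word n b)"
  by (auto simp: valid_word_def)
lemma valid_Cons[simp]: "valid_word n (g # b) = (valid_gen n g \<and> valid_word n b)"
  by (auto simp: valid_word_def)
lemma valid_Nil[simp]: "valid_word n []"
  by (auto simp: valid_word_def)
lemma valid_gen_simps[simp]: "valid_gen n (Cl i) = (1 \<le> i \<and> i \<le> n)" "valid_gen n (S i) = (1 \<le> i \<and> i \<le> n)"
  by (auto simp: valid_gen_def)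
lemma valid_map_S: "set ws \<subseteq> {1..n} \<Longrightarrow> valid_word n (map S ws)"
  by (auto simp: valid_word_def)
lemma valid_map_Cl: "set ws \<subseteq> {1..n} \<Longrightarrow> valid_word n (map Cl ws)"
  by (auto simp: valid_word_def)

lemma RR_ClCl: "i \<in> {1..n} \<Longrightarrow> valid_word n a \<Longrightarrow> valid_word n b \<Longrightarrow> RR n u v (a @ [Cl i, Cl i] @ b) 1 (a @ b)"
  using RR_base[OF rel_ClCl[of i n u v], of a b] by simp

lemma RR_anti: "i \<in> {1..n} \<Longrightarrow> j \<in> {1..n} \<Longrightarrow> i \<noteq> j \<Longrightarrow> valid_word n a \<Longrightarrow> valid_word n b \<Longrightarrow>
   RR n u v (a @ [Cl i, Cl j] @ b) (-1) (a @ [Cl j, Cl i] @ b)"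
  using RR_base[OF rel_ClCl2[of i n j u v], of a b] by simp

lemma sgen_odd: "sgen n i (- k) = - sgen n i k"
  unfolding sgen_def by (auto simp: sgn_if)

lemma sgen_sgn: "k \<noteq> 0 \<Longrightarrow> sgen n i k = sgn k * sgen n i (int (nat \<bar>k\<bar>))"
proof (cases "k > 0")
  case True then show ?thesis by simp
next
  case False
  assume "k \<noteq> 0"
  with False have e: "int (nat \<bar>k\<bar>) = - k" and s: "sgn k = -1" by auto
  show ?thesis unfolding e s sgen_odd by simp
qed

lemma pos_facts: "x = int m \<Longrightarrow> m > 0 \<Longrightarrow> x \<noteq> 0 \<and> nat \<bar>x\<bar> = m \<and> sgn x = 1"
  by auto
lemma neg_facts: "x = - int m \<Longrightarrow> m > 0 \<Longrightarrow> x \<noteq> 0 \<and> nat \<bar>x\<bar> = m \<and> sgn x = -1"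
  by auto

lemma sgen_step:
  assumes i: "i \<in> {1..n}" and j: "j \<in> {1..n}" and a: "valid_word n a" and b: "valid_word n b"
  shows "sgen n i (int j) \<noteq> 0 \<and> nat \<bar>sgen n i (int j)\<bar> \<in> {1..n} \<and>
     RR n u v (a @ [S i, Cl j] @ b) (of_int (sgn (sgen n i (int j)))) (a @ [Cl (nat \<bar>sgen n i (int j)\<bar>), S i] @ b)"
proof (cases "i < n")
  case True
  then have i1: "1 \<le> i" using i by simp
  show ?thesis
  proof (cases "j = i")
    case True
    have "sgen n i (int j) = int (Suc i)" using \<open>i < n\<close> True i1 unfolding sgen_def by simp
    from pos_facts[OF this] have f: "sgen n i (int j) \<noteq> 0" "nat \<bar>sgen n i (int j)\<bar> = Suc i" "sgn (sgen n i (int j)) = 1" by auto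
    show ?thesis unfolding f using f RR_base[OF rel_SCl1[of i n u v], of a b] True \<open>i < n\<close> i1 a b by simp
  next
    case ne: False
    show ?thesis
    proof (cases "j = Suc i")
      case True
      have "sgen n i (int j) = int i" using \<open>i < n\<close> True i1 unfolding sgen_def by simp
      from pos_facts[OF this] i1 have f: "sgen n i (int j) \<noteq> 0" "nat \<bar>sgen n i (int j)\<bar> = i" "sgn (sgen n i (int j)) = 1" by auto
      show ?thesis unfolding f using f RR_base[OF rel_SCl2[of i n u v], of a b] True \<open>i < n\<close> i1 a b by simp
    next
      case False
      have "sgen n i (int j) = int j" using \<open>i < n\<close> False ne i1 unfolding sgen_def by auto
      from pos_facts[OF this] j have f: "sgen n i (int j) \<noteq> 0" "nat \<bar>sgen n i (int j)\<bar> = j" "sgn (sgen n i (int j)) = 1" by auto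
      show ?thesis unfolding f using f RR_base[OF rel_SCl3[of i n j u v], of a b] False ne \<open>i < n\<close> i1 j a b by simp
    qed
  qed
next
  case False
  then have "i = n" using i by simp
  show ?thesis
  proof (cases "j = n")
    case True
    have "sgen n i (int j) = - int n" using \<open>i = n\<close> True unfolding sgen_def by simp
    from neg_facts[OF this] i \<open>i = n\<close> have f: "sgen n i (int j) \<noteq> 0" "nat \<bar>sgen n i (int j)\<bar> = n" "sgn (sgen n i (int j)) = -1" by auto
    show ?thesis unfolding f using f RR_base[OF rel_SnCl1[of n u v], of a b] True \<open>i = n\<close> i a b by simp
  next
    case False
    have "sgen n i (int j) = int j" using \<open>i = n\<close> False unfolding sgen_def by auto
    from pos_facts[OF this] j have f: "sgen n i (int j) \<noteq> 0" "nat \<bar>sgen n i (int j)\<bar> = j" "sgn (sgen n i (int j)) = 1" by auto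
    show ?thesis unfolding f using f RR_base[OF rel_SnCl2[of j n u v], of a b] False \<open>i = n\<close> j a b by simp
  qed
qed

lemma wtp_Nil[simp]: "word_to_perm n [] = id"
  by (simp add: word_to_perm_def)
lemma wtp_Cons[simp]: "word_to_perm n (i # ws) = sgen n i \<circ> word_to_perm n ws"
  by (simp add: word_to_perm_def)

lemma word_comm:
  assumes "set ws \<subseteq> {1..n}" "j \<in> {1..n}"
  shows "\<And>a b. valid_word n a \<Longrightarrow> valid_word n b \<Longrightarrow>
     word_to_perm n ws (int j) \<noteq> 0 \<and> nat \<bar>word_to_perm n ws (int j)\<bar> \<in> {1..n} \<and>
     RR n u v (a @ map S ws @ [Cl j] @ b) (of_int (sgn (word_to_perm n ws (int j))))
        (a @ [Cl (nat \<bar>word_to_perm n ws (int j)\<bar>)] @ map S ws @ b)"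
  using assms(1)
proof (induction ws)
  case Nil
  then show ?case using assms(2) RR_refl by simp
next
  case (Cons i ws)
  let ?k = "word_to_perm n ws (int j)"
  let ?j = "nat \<bar>?k\<bar>"
  have i: "i \<in> {1..n}" and ws: "set ws \<subseteq> {1..n}" using Cons.prems by auto
  have vS: "valid_word n (map S ws)" using valid_map_S[OF ws] .
  have IH: "?k \<noteq> 0 \<and> ?j \<in> {1..n} \<and>
     RR n u v ((a @ [S i]) @ map S ws @ [Cl j] @ b) (of_int (sgn ?k)) ((a @ [S i]) @ [Cl ?j] @ map S ws @ b)"
    using Cons.IH[OF _ Cons.prems(2) ws, of "a @ [S i]"] Cons.prems(1) i by simp
  have st: "sgen n i (int ?j) \<noteq> 0 \<and> nat \<bar>sgen n i (int ?j)\<bar> \<in> {1..n} \<and>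
     RR n u v (a @ [S i, Cl ?j] @ (map S ws @ b)) (of_int (sgn (sgen n i (int ?j))))
        (a @ [Cl (nat \<bar>sgen n i (int ?j)\<bar>), S i] @ (map S ws @ b))"
    using sgen_step[OF i _ Cons.prems(1), of ?j "map S ws @ b" u v] IH vS Cons.prems(2) by simp
  have eq: "word_to_perm n (i # ws) (int j) = sgn ?k * sgen n i (int ?j)"
    using sgen_sgn[of ?k n i] IH by simp
  have sg: "sgn (word_to_perm n (i # ws) (int j)) = sgn ?k * sgn (sgen n i (int ?j))"
    unfolding eq by (simp add: sgn_mult)
  have ab: "nat \<bar>word_to_perm n (i # ws) (int j)\<bar> = nat \<bar>sgen n i (int ?j)\<bar>"
    unfolding eq using IH by (simp add: abs_mult abs_sgn_eq)
  have nz: "word_to_perm n (i # ws) (int j) \<noteq> 0"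
    unfolding eq using IH st by (simp add: sgn_0_0)
  have r1: "RR n u v (a @ map S (i # ws) @ [Cl j] @ b) (of_int (sgn ?k)) (a @ [S i, Cl ?j] @ map S ws @ b)"
    using IH by simp
  have r2: "RR n u v (a @ [S i, Cl ?j] @ map S ws @ b) (of_int (sgn (sgen n i (int ?j))))
        (a @ [Cl (nat \<bar>sgen n i (int ?j)\<bar>)] @ map S (i # ws) @ b)"
    using st by simp
  have "RR n u v (a @ map S (i # ws) @ [Cl j] @ b) (of_int (sgn ?k) * of_int (sgn (sgen n i (int ?j))))
        (a @ [Cl (nat \<bar>sgen n i (int ?j)\<bar>)] @ map S (i # ws) @ b)"
    by (rule RR_trans[OF r1 r2])
  then show ?case using nz ab sg st by simp
qed

lemma prod_comm:
  assumes "set ws \<subseteq> {1..n}" "set L \<subseteq> {1..n}"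
  shows "\<And>a b. valid_word n a \<Longrightarrow> valid_word n b \<Longrightarrow>
     RR n u v (a @ map S ws @ map Cl L @ b) (\<Prod>x\<leftarrow>L. of_int (sgn (word_to_perm n ws (int x))))
        (a @ map Cl (map (\<lambda>x. nat \<bar>word_to_perm n ws (int x)\<bar>) L) @ map S ws @ b)"
  using assms(2)
proof (induction L)
  case Nil
  then show ?case using RR_refl by simp
next
  case (Cons x L)
  let ?x = "nat \<bar>word_to_perm n ws (int x)\<bar>"
  have x: "x \<in> {1..n}" and L: "set L \<subseteq> {1..n}" using Cons.prems by auto
  have wc: "?x \<in> {1..n} \<and> RR n u v (a @ map S ws @ [Cl x] @ (map Cl L @ b)) (of_int (sgn (word_to_perm n ws (int x))))
        (a @ [Cl ?x] @ map S ws @ (map Cl L @ b))"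
    using word_comm[OF assms(1) x, of a "map Cl L @ b" u v] Cons.prems valid_map_Cl[OF L] by simp
  have r1: "RR n u v (a @ map S ws @ map Cl (x # L) @ b) (of_int (sgn (word_to_perm n ws (int x))))
        ((a @ [Cl ?x]) @ map S ws @ map Cl L @ b)"
    using wc by simp
  have r2: "RR n u v ((a @ [Cl ?x]) @ map S ws @ map Cl L @ b) (\<Prod>x\<leftarrow>L. of_int (sgn (word_to_perm n ws (int x))))
        ((a @ [Cl ?x]) @ map Cl (map (\<lambda>x. nat \<bar>word_to_perm n ws (int x)\<bar>) L) @ map S ws @ b)"
    using Cons.IH[OF _ Cons.prems(2) L, of "a @ [Cl ?x]"] Cons.prems(1) wc by simp
  show ?case using RR_trans[OF r1 r2] by simp
qed

lemma rot_comm: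
  assumes "x \<in> {1..n}" "x \<notin> set L" "set L \<subseteq> {1..n}"
  shows "\<And>a. valid_word n a \<Longrightarrow> valid_word n b \<Longrightarrow>
     RR n u v (a @ map Cl L @ [Cl x] @ b) ((-1) ^ length L) (a @ [Cl x] @ map Cl L @ b)"
  using assms(2,3)
proof (induction L)
  case Nil
  then show ?case using RR_refl by simp
next
  case (Cons y L)
  have y: "y \<in> {1..n}" and L: "set L \<subseteq> {1..n}" and xy: "x \<noteq> y" and xL: "x \<notin> set L" using Cons.prems by auto
  have r1: "RR n u v (a @ map Cl (y # L) @ [Cl x] @ b) ((-1) ^ length L) (a @ [Cl y, Cl x] @ (map Cl L @ b))"
    using Cons.IH[OF _ Cons.prems(2) xL L, of "a @ [Cl y]"] Cons.prems(1) y by simp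
  have r2: "RR n u v (a @ [Cl y, Cl x] @ (map Cl L @ b)) (-1) (a @ [Cl x] @ map Cl (y # L) @ b)"
    using RR_anti[OF y assms(1) _ Cons.prems(1), of "map Cl L @ b" u v] xy Cons.prems(2) valid_map_Cl[OF L] by simp
  show ?case using RR_trans[OF r1 r2] by simp
qed

lemma cancel1:
  assumes "set L \<subseteq> {1..n}" "valid_word n a" "valid_word n b"
  shows "RR n u v (a @ map Cl (rev L) @ map Cl L @ b) 1 (a @ b)"
  using assms(1)
proof (induction L)
  case Nil
  then show ?case using RR_refl by simp
next
  case (Cons x L)
  have x: "x \<in> {1..n}" and L: "set L \<subseteq> {1..n}" using Cons.prems by auto
  have r1: "RR n u v (a @ map Cl (rev (x # L)) @ map Cl (x # L) @ b) 1 (a @ map Cl (rev L) @ map Cl L @ b)"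
    using RR_ClCl[OF x, of "a @ map Cl (rev L)" "map Cl L @ b" u v] assms valid_map_Cl[OF L] valid_map_Cl[of "rev L" n] L by simp
  show ?case using RR_trans[OF r1 Cons.IH[OF L]] by simp
qed

lemma cancel2:
  assumes "set L \<subseteq> {1..n}"
  shows "\<And>a b. valid_word n a \<Longrightarrow> valid_word n b \<Longrightarrow> RR n u v (a @ map Cl L @ map Cl (rev L) @ b) 1 (a @ b)"
  using assms(1)
proof (induction L)
  case Nil
  then show ?case using RR_refl by simp
next
  case (Cons x L)
  have x: "x \<in> {1..n}" and L: "set L \<subseteq> {1..n}" using Cons.prems by auto
  have r1: "RR n u v (a @ map Cl (x # L) @ map Cl (rev (x # L)) @ b) 1 (a @ [Cl x, Cl x] @ b)"
    using Cons.IH[OF _ _ L, of "a @ [Cl x]" "[Cl x] @ b"] Cons.prems x by simp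
  have r2: "RR n u v (a @ [Cl x, Cl x] @ b) 1 (a @ b)"
    using RR_ClCl[OF x Cons.prems(1,2)] .
  show ?case using RR_trans[OF r1 r2] by simp
qed

lemma in_free_mono: "valid_word n p \<Longrightarrow> in_free n (mono p)"
proof -
  assume "valid_word n p"
  have "{w. mono p w \<noteq> 0} = {p}" by (auto simp: mono_def)
  then show ?thesis using \<open>valid_word n p\<close> unfolding in_free_def by (auto simp: mono_def)
qed

lemma main_alg:
  assumes ws: "set ws \<subseteq> {1..n}" and L: "L \<noteq> []" "distinct L" "set L \<subseteq> {1..n}"
    and rot: "map (\<lambda>x. nat \<bar>word_to_perm n ws (int x)\<bar>) L = rotate1 L"
    and sgn: "(\<Prod>x\<leftarrow>L. of_int (sgn (word_to_perm n ws (int x)))) * (-1) ^ (length L - 1) = (-1 :: complex)"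
  shows "in_commutator_space n u v (mono (map S ws))"
proof -
  define T where "T = map S ws"
  define C where "C = map Cl L"
  define Cr where "Cr = map Cl (rev L)"
  have vT: "valid_word n T" unfolding T_def using valid_map_S[OF ws] .
  have vC: "valid_word n C" unfolding C_def using valid_map_Cl[OF L(3)] .
  have vCr: "valid_word n Cr" unfolding Cr_def using valid_map_Cl[of "rev L" n] L(3) by simp
  have e1: "RR n u v (T @ C @ Cr) 1 T"
    using cancel2[OF L(3) vT valid_Nil, of u v] unfolding C_def Cr_def by simp
  have a1: "RR n u v (Cr @ T @ C) (\<Prod>x\<leftarrow>L. of_int (sgn (word_to_perm n ws (int x)))) (Cr @ map Cl (rotate1 L) @ T)"
    using prod_comm[OF ws L(3) vCr valid_Nil, of u v] rot unfolding T_def C_def by simp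
  obtain x L' where xL: "L = x # L'" using L(1) by (cases L) auto
  have x: "x \<in> {1..n}" and L': "set L' \<subseteq> {1..n}" "x \<notin> set L'" using L xL by auto
  have a2: "RR n u v (Cr @ map Cl (rotate1 L) @ T) ((-1) ^ (length L - 1)) (Cr @ C @ T)"
    using rot_comm[OF x L'(2) L'(1) vCr vT, of u v] unfolding xL C_def by simp
  have a3: "RR n u v (Cr @ C @ T) 1 T"
    using cancel1[OF L(3) valid_Nil vT, of u v] unfolding C_def Cr_def by simp
  have e2: "RR n u v (Cr @ T @ C) (-1) T"
    using RR_trans[OF RR_trans[OF a1 a2] a3] sgn by simp
  define I where "I = lspan (commutators n \<union> ideal_gens n u v)"
  have sub: "lspan (ideal_gens n u v) \<subseteq> I" unfolding I_def using lspan_mono by blast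
  have i1: "(\<lambda>w. mono (T @ C @ Cr) w - 1 * mono T w) \<in> I" using e1 sub unfolding RR_def by blast
  have i2: "(\<lambda>w. mono (Cr @ T @ C) w - (-1) * mono T w) \<in> I" using e2 sub unfolding RR_def by blast
  have "(\<lambda>w. fmul (mono (T @ C)) (mono Cr) w - fmul (mono Cr) (mono (T @ C)) w) \<in> commutators n"
    unfolding commutators_def using in_free_mono[of n "T @ C"] in_free_mono[OF vCr] vT vC by auto
  then have i3: "(\<lambda>w. mono (T @ C @ Cr) w - mono (Cr @ T @ C) w) \<in> I"
    unfolding I_def fmul_mono_mono by (auto intro: lspan_base)
  have "(\<lambda>w. (1/2) * (mono (T @ C @ Cr) w - mono (Cr @ T @ C) w) +
       ((-1/2) * (mono (T @ C @ Cr) w - 1 * mono T w) + (1/2) * (mono (Cr @ T @ C) w - (-1) * mono T w))) \<in> I"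
    using lspan_add[OF lspan_scale[OF i3[unfolded I_def]] lspan_add[OF lspan_scale[OF i1[unfolded I_def]] lspan_scale[OF i2[unfolded I_def]]]]
    unfolding I_def .
  moreover have "(\<lambda>w. (1/2) * (mono (T @ C @ Cr) w - mono (Cr @ T @ C) w) +
       ((-1/2) * (mono (T @ C @ Cr) w - 1 * mono T w) + (1/2) * (mono (Cr @ T @ C) w - (-1) * mono T w))) = mono T"
    by (auto simp: fun_eq_iff algebra_simps)
  ultimately show ?thesis unfolding in_commutator_space_def I_def T_def by simp
qed

lemma sp_facts:
  assumes "w \<in> signed_perms n"
  shows "\<And>i. i \<in> {1..n} \<Longrightarrow> w (int i) \<noteq> 0 \<and> \<bar>w (int i)\<bar> \<le> int n"
    and "\<And>i. i \<notin> {1..n} \<Longrightarrow> underlying w i = i"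
    and "inj_on (underlying w) {1..n}"
proof -
  let ?N = "{k::int. k \<noteq> 0 \<and> \<bar>k\<bar> \<le> int n}"
  have b: "bij_betw w ?N ?N" and odd: "\<And>k. w (- k) = - w k" and fx: "\<And>k. \<bar>k\<bar> > int n \<Longrightarrow> w k = k"
    using assms unfolding signed_perms_def by auto
  show 1: "w (int i) \<noteq> 0 \<and> \<bar>w (int i)\<bar> \<le> int n" if "i \<in> {1..n}" for i
  proof -
    have "int i \<in> ?N" using that by auto
    then have "w (int i) \<in> ?N" using bij_betwE[OF b] by blast
    then show ?thesis by simp
  qed
  show "underlying w i = i" if "i \<notin> {1..n}" for i
  proof (cases "i = 0")
    case True
    have "w 0 = - w 0" using odd[of 0] by simp
    then have "w 0 = 0" by simp
    then show ?thesis using True unfolding underlying_def by simp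
  next
    case False
    then have "\<bar>int i\<bar> > int n" using that by auto
    then show ?thesis using fx unfolding underlying_def by simp
  qed
  show "inj_on (underlying w) {1..n}"
  proof (rule inj_onI)
    fix a b assume a: "a \<in> {1..n}" and bb: "b \<in> {1..n}" and e: "underlying w a = underlying w b"
    have ia: "int a \<in> ?N" and ib: "int b \<in> ?N" "- int b \<in> ?N" using a bb by auto
    have "\<bar>w (int a)\<bar> = \<bar>w (int b)\<bar>" using e unfolding underlying_def by simp
    then have "w (int a) = w (int b) \<or> w (int a) = w (- int b)" using odd[of "int b"] by (auto simp: abs_eq_iff)
    then have "int a = int b \<or> int a = - int b"
      using bij_betw_imp_inj_on[OF b] ia ib unfolding inj_on_def by blast
    then show "a = b" using a bb by auto
  qed
qed

lemma sgn_prod: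
  assumes "distinct L" "\<forall>x\<in>set L. w (int x) \<noteq> 0"
  shows "(\<Prod>x\<leftarrow>L. (of_int (sgn (w (int x))) :: complex)) = (-1) ^ card {x \<in> set L. w (int x) < 0}"
  using assms
proof (induction L)
  case Nil then show ?case by simp
next
  case (Cons x L)
  then have IH: "(\<Prod>x\<leftarrow>L. (of_int (sgn (w (int x))) :: complex)) = (-1) ^ card {x \<in> set L. w (int x) < 0}" by simp
  have fin: "finite {y \<in> set L. w (int y) < 0}" by simp
  have xn: "x \<notin> {y \<in> set L. w (int y) < 0}" using Cons.prems by simp
  show ?case
  proof (cases "w (int x) < 0")
    case True
    then have "{y \<in> set (x # L). w (int y) < 0} = insert x {y \<in> set L. w (int y) < 0}" by auto
    then show ?thesis using IH True card_insert_disjoint[OF fin xn] by simp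
  next
    case False
    then have "w (int x) > 0" using Cons.prems by auto
    moreover have "{y \<in> set (x # L). w (int y) < 0} = {y \<in> set L. w (int y) < 0}" using False by auto
    ultimately show ?thesis using IH by simp
  qed
qed

lemma rot_support:
  assumes "m > 0" "(f ^^ m) x = x"
  shows "map f (map (\<lambda>k. (f ^^ k) x) [0..<m]) = rotate1 (map (\<lambda>k. (f ^^ k) x) [0..<m])"
proof (rule nth_equalityI)
  show "length (map f (map (\<lambda>k. (f ^^ k) x) [0..<m])) = length (rotate1 (map (\<lambda>k. (f ^^ k) x) [0..<m]))" by simp
  fix k assume "k < length (map f (map (\<lambda>k. (f ^^ k) x) [0..<m]))"
  then have k: "k < m" by simp
  have "rotate1 (map (\<lambda>k. (f ^^ k) x) [0..<m]) ! k = (f ^^ (Suc k mod m)) x"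
    using k by (simp add: nth_rotate1)
  also have "\<dots> = (f ^^ Suc k) x"
  proof (cases "Suc k < m")
    case True then show ?thesis by simp
  next
    case False
    then have "Suc k = m" using k by simp
    then show ?thesis using assms(2) by simp
  qed
  finally show "map f (map (\<lambda>k. (f ^^ k) x) [0..<m]) ! k = rotate1 (map (\<lambda>k. (f ^^ k) x) [0..<m]) ! k"
    using k by simp
qed

lemma sign_arith: "k \<ge> 1 \<Longrightarrow> even (m + k) \<Longrightarrow> (-1::complex) ^ m * (-1) ^ (k - 1) = -1"
proof -
  assume "k \<ge> 1" "even (m + k)"
  then have o: "odd (m + (k - 1))" by presburger
  have "(-1::complex) ^ m * (-1) ^ (k - 1) = (-1) ^ (m + (k - 1))" by (simp add: power_add)
  also have "\<dots> = -1" using o by simp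
  finally show ?thesis .
qed

theorem proposition3p4p1:
  fixes n :: nat and u v :: complex and w :: "int \<Rightarrow> int"
  assumes "2 \<le> n"
    and "w \<in> signed_perms n"
    and "\<not> ((\<forall>l \<in># sct_lambda n w. odd l) \<and> (\<forall>m \<in># sct_mu n w. even m))"
  shows "\<forall>ws. set ws \<subseteq> {1..n} \<longrightarrow> word_to_perm n ws = w \<longrightarrow>
           in_commutator_space n u v (mono (map S ws))"
proof (intro allI impI)
  fix ws assume ws: "set ws \<subseteq> {1..n}" and wp: "word_to_perm n ws = w"
  define f where "f = underlying w"
  note sp = sp_facts[OF assms(2)]
  have inj: "inj_on f {1..n}" unfolding f_def using sp(3) .
  have maps: "f ` {1..n} \<subseteq> {1..n}"
  proof
    fix y assume "y \<in> f ` {1..n}"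
    then obtain i where i: "i \<in> {1..n}" "y = f i" by auto
    from sp(1)[OF i(1)] have "w (int i) \<noteq> 0" "\<bar>w (int i)\<bar> \<le> int n" by auto
    then show "y \<in> {1..n}" using i unfolding f_def underlying_def by auto
  qed
  have "f ` {1..n} = {1..n}" using endo_inj_surj[OF _ maps inj] by simp
  then have bij: "bij_betw f {1..n} {1..n}" using inj unfolding bij_betw_def by simp
  have fperm: "f permutes {1..n}"
    by (rule bij_imp_permutes[OF bij]) (use sp(2) in \<open>simp add: f_def\<close>)
  have perm: "permutation f" using permutes_imp_permutation[OF _ fperm] by simp
  have fin: "finite (cycles n w)" unfolding cycles_def by simp
  have "\<exists>cy \<in> cycles n w. (even (nsigns w cy) \<and> even (card cy)) \<or> (odd (nsigns w cy) \<and> odd (card cy))"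
  proof -
    have f1: "finite {cy \<in> cycles n w. even (nsigns w cy)}" "finite {cy \<in> cycles n w. odd (nsigns w cy)}"
      using fin by auto
    show ?thesis using assms(3) f1 unfolding sct_lambda_def sct_mu_def by auto
  qed
  then obtain cy where cy: "cy \<in> cycles n w" and par: "even (nsigns w cy + card cy)"
    by auto
  obtain i0 where i0: "i0 \<in> {1..n}" and cyeq: "cy = cyc n w i0" using cy unfolding cycles_def by auto
  define L where "L = support f i0"
  have inS: "(f ^^ k) i0 \<in> {1..n}" for k
    using permutes_in_image[OF permutes_funpow[OF fperm, of k]] i0 by simp
  have cyL: "cy = set L"
    unfolding cyeq L_def support_set[OF perm] cyc_def f_def[symmetric] using inS by auto
  have dist: "distinct L" unfolding L_def using cycle_of_permutation[OF perm] .
  have lp: "least_power f i0 > 0" "(f ^^ least_power f i0) i0 = i0"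
    using least_power_of_permutation[OF perm] by auto
  have Lne: "L \<noteq> []" unfolding L_def using lp by simp
  have LS: "set L \<subseteq> {1..n}" using cyL cyeq unfolding cyc_def by auto
  have rot: "map f L = rotate1 L" unfolding L_def using rot_support[OF lp] by simp
  have rot': "map (\<lambda>x. nat \<bar>word_to_perm n ws (int x)\<bar>) L = rotate1 L"
    using rot unfolding wp f_def underlying_def .
  have nz: "\<forall>x\<in>set L. w (int x) \<noteq> 0" using LS sp(1) by auto
  have pr: "(\<Prod>x\<leftarrow>L. (of_int (sgn (word_to_perm n ws (int x))) :: complex)) = (-1) ^ nsigns w cy"
    unfolding wp nsigns_def cyL using sgn_prod[OF dist nz] by simp
  have len: "length L = card cy" using distinct_card[OF dist] cyL by simp
  have "length L \<ge> 1" using Lne by (cases L) auto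
  then have sg: "(\<Prod>x\<leftarrow>L. of_int (sgn (word_to_perm n ws (int x)))) * (-1) ^ (length L - 1) = (-1 :: complex)"
    unfolding pr using sign_arith[of "length L" "nsigns w cy"] par len by simp
  show "in_commutator_space n u v (mono (map S ws))"
    using main_alg[OF ws Lne dist LS rot' sg] .
qed

end
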